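(* Let $0<V\le1$ and let $$P^{col}_{BB84}(ab|xy)=\frac{1+(-1)^{a\oplus b\oplus x\cdot y}\big[\delta_{x,y}V+\tfrac{1-V}{2}\big]+(-1)^{a\oplus b\oplus x\oplus y}\tfrac{1-V}{2}}{4},\qquad a,b,x,y\in\{0,1\}.$$ In the steering scenario described in the context, the steering cost of $P^{col}_{BB84}$ is $C_{steer}(P^{col}_{BB84})=V$.
   Context: Steering scenario: Alice performs two black-box dichotomic measurements $x\in\{0,1\}$ (outcomes $a\in\{0,1\}$) on her part of an unknown $d\times2$ quantum state $\rho_{AB}$; Bob performs projective qubit measurements in two mutually unbiased bases $\{|f_1\rangle,|f_2\rangle\}$, $\{|g_1\rangle,|g_2\rangle\}$ of $\mathbb{C}^2$ ($|\langle f_i|g_j\rangle|^2=1/2$), with $\Pi_{b|0}=|f_{b+1}\rangle\langle f_{b+1}|$, $\Pi_{b|1}=|g_{b+1}\rangle\langle g_{b+1}|$. Let $\mathcal{N}$ be the set of boxes $p(ab|xy)=\operatorname{Tr}[\Pi_{b|y}\sigma_{a|x}]$ with $\sigma_{a|x}=\operatorname{Tr}_A[(M_{a|x}\otimes\mathbb{1})\rho_{AB}]$ for some such state and POVMs $\{M_{a|x}\}$. A box is unsteerable if $p(ab|xy)=\sum_\lambda p(\lambda)p(a|x,\lambda)\operatorname{Tr}(\Pi_{b|y}\rho_\lambda)$ for some probability distribution $p(\lambda)$, conditional distributions $p(a|x,\lambda)$ and qubit density operators $\rho_\lambda$; otherwise steerable. The steering cost $C_{steer}(P)$ of $P\in\mathcal{N}$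 is the minimum of $p_S\in[0,1]$ over all decompositions $P=p_SP_S+(1-p_S)P_{US}$ with $P_S\in\mathcal{N}$ steerable and $P_{US}$ unsteerable. $\oplus$ is addition modulo 2. *)

theory Defs
  imports Complex_Main
begin

text \<open>Alice's space is C^d (indices 0..<d), Bob's space is C^2 (indices 0,1);
  the joint space C^d (x) C^2 is indexed by pairs (i,k), i < d, k < 2.
  Boxes p(ab|xy) are functions a b x y with a,b,x,y in {0,1}.\<close>

type_synonym box = "nat \<Rightarrow> nat \<Rightarrow> nat \<Rightarrow> nat \<Rightarrow> real"

definition bits :: "nat set" where "bits = {0,1}"

definition psd_on :: "'i set \<Rightarrow> ('i \<Rightarrow> 'i \<Rightarrow> complex) \<Rightarrow> bool" where
  "psd_on I A \<longleftrightarrow> (\<forall>v::'i \<Rightarrow> complex.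
     let q = (\<Sum>r\<in>I. \<Sum>s\<in>I. cnj (v r) * A r s * v s) in Im q = 0 \<and> Re q \<ge> 0)"

definition mtrace :: "'i set \<Rightarrow> ('i \<Rightarrow> 'i \<Rightarrow> complex) \<Rightarrow> complex" where
  "mtrace I A = (\<Sum>r\<in>I. A r r)"

definition mmult :: "'i set \<Rightarrow> ('i \<Rightarrow> 'i \<Rightarrow> complex) \<Rightarrow> ('i \<Rightarrow> 'i \<Rightarrow> complex) \<Rightarrow> ('i \<Rightarrow> 'i \<Rightarrow> complex)" where
  "mmult I A B = (\<lambda>r s. \<Sum>t\<in>I. A r t * B t s)"

definition density_on :: "'i set \<Rightarrow> ('i \<Rightarrow> 'i \<Rightarrow> complex) \<Rightarrow> bool" where
  "density_on I \<rho> \<longleftrightarrow> psd_on I \<rho> \<and> mtrace I \<rho> = 1"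

definition joint_idx :: "nat \<Rightarrow> (nat \<times> nat) set" where
  "joint_idx d = {..<d} \<times> {..<2}"

definition povm2 :: "nat \<Rightarrow> (nat \<Rightarrow> nat \<Rightarrow> nat \<Rightarrow> complex) \<Rightarrow> bool" where
  "povm2 d M \<longleftrightarrow> (\<forall>a\<in>bits. psd_on {..<d} (M a)) \<and>
     (\<forall>i<d. \<forall>j<d. M 0 i j + M 1 i j = (if i = j then 1 else 0))"

text \<open>Partial trace over A of (M (x) 1) rho: a 2x2 operator on Bob's qubit.\<close>
definition ptraceA :: "nat \<Rightarrow> (nat \<Rightarrow> nat \<Rightarrow> complex) \<Rightarrow> (nat \<times> nat \<Rightarrow> nat \<times> nat \<Rightarrow> complex)
     \<Rightarrow> (nat \<Rightarrow> nat \<Rightarrow> complex)" where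
  "ptraceA d M \<rho> = (\<lambda>k l. \<Sum>i<d. \<Sum>j<d. M i j * \<rho> (j, k) (i, l))"

definition proj :: "(nat \<Rightarrow> complex) \<Rightarrow> (nat \<Rightarrow> nat \<Rightarrow> complex)" where
  "proj v = (\<lambda>k l. v k * cnj (v l))"

definition inner2 :: "(nat \<Rightarrow> complex) \<Rightarrow> (nat \<Rightarrow> complex) \<Rightarrow> complex" where
  "inner2 u v = (\<Sum>k<2. cnj (u k) * v k)"

text \<open>Bob's measurements: basis e y b (vector of outcome b for setting y), y,b in {0,1}:
  e 0 = (f_1,f_2), e 1 = (g_1,g_2), two mutually unbiased orthonormal bases of C^2.\<close>
definition MUB_pair :: "(nat \<Rightarrow> nat \<Rightarrow> nat \<Rightarrow> complex) \<Rightarrow> bool" where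
  "MUB_pair e \<longleftrightarrow>
     (\<forall>y\<in>bits. \<forall>b\<in>bits. \<forall>b'\<in>bits. inner2 (e y b) (e y b') = (if b = b' then 1 else 0)) \<and>
     (\<forall>i\<in>bits. \<forall>j\<in>bits. (cmod (inner2 (e 0 i) (e 1 j)))\<^sup>2 = 1/2)"

definition quantum_box :: "(nat \<Rightarrow> nat \<Rightarrow> nat \<Rightarrow> complex) \<Rightarrow> box \<Rightarrow> bool" where
  "quantum_box e P \<longleftrightarrow> (\<exists>d>0. \<exists>\<rho> M.
     density_on (joint_idx d) \<rho> \<and> (\<forall>x\<in>bits. povm2 d (M x)) \<and>
     (\<forall>a\<in>bits. \<forall>b\<in>bits. \<forall>x\<in>bits. \<forall>y\<in>bits.
        P a b x y = Re (mtrace {..<2} (mmult {..<2} (proj (e y b)) (ptraceA d (M x a) \<rho>)))))"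

text \<open>Unsteerable (LHS) boxes, with a finite hidden variable lambda < n.\<close>
definition unsteerable :: "(nat \<Rightarrow> nat \<Rightarrow> nat \<Rightarrow> complex) \<Rightarrow> box \<Rightarrow> bool" where
  "unsteerable e P \<longleftrightarrow> (\<exists>n::nat. \<exists>pl::nat \<Rightarrow> real. \<exists>pa::nat \<Rightarrow> nat \<Rightarrow> nat \<Rightarrow> real.
     \<exists>rl::nat \<Rightarrow> nat \<Rightarrow> nat \<Rightarrow> complex.
     (\<forall>l<n. pl l \<ge> 0) \<and> (\<Sum>l<n. pl l) = 1 \<and>
     (\<forall>l<n. \<forall>x\<in>bits. (\<forall>a\<in>bits. pa l x a \<ge> 0) \<and> pa l x 0 + pa l x 1 = 1) \<and>
     (\<forall>l<n. density_on {..<2} (rl l)) \<and>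
     (\<forall>a\<in>bits. \<forall>b\<in>bits. \<forall>x\<in>bits. \<forall>y\<in>bits.
        P a b x y = (\<Sum>l<n. pl l * pa l x a *
                       Re (mtrace {..<2} (mmult {..<2} (proj (e y b)) (rl l))))))"

definition steerable :: "(nat \<Rightarrow> nat \<Rightarrow> nat \<Rightarrow> complex) \<Rightarrow> box \<Rightarrow> bool" where
  "steerable e P \<longleftrightarrow> \<not> unsteerable e P"

definition steer_weights :: "(nat \<Rightarrow> nat \<Rightarrow> nat \<Rightarrow> complex) \<Rightarrow> box \<Rightarrow> real set" where
  "steer_weights e P = {pS. 0 \<le> pS \<and> pS \<le> 1 \<and> (\<exists>PS PUS.
     quantum_box e PS \<and> steerable e PS \<and> unsteerable e PUS \<and>
     (\<forall>a\<in>bits. \<forall>b\<in>bits. \<forall>x\<in>bits. \<forall>y\<in>bits.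
        P a b x y = pS * PS a b x y + (1 - pS) * PUS a b x y))}"

definition is_steering_cost :: "(nat \<Rightarrow> nat \<Rightarrow> nat \<Rightarrow> complex) \<Rightarrow> box \<Rightarrow> real \<Rightarrow> bool" where
  "is_steering_cost e P c \<longleftrightarrow> c \<in> steer_weights e P \<and> (\<forall>p\<in>steer_weights e P. c \<le> p)"

definition P_col_BB84 :: "real \<Rightarrow> box" where
  "P_col_BB84 V = (\<lambda>a b x y.
     (1 + (-1) ^ (a + b + x * y) * ((if x = y then 1 else 0) * V + (1 - V) / 2)
        + (-1) ^ (a + b + x + y) * ((1 - V) / 2)) / 4)"

end

theory Submission
  imports Defs
begin

definition qf :: "'i set \<Rightarrow> ('i \<Rightarrow> 'i \<Rightarrow> complex) \<Rightarrow> ('i \<Rightarrow> complex) \<Rightarrow> complex" where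
  "qf I A v = (\<Sum>r\<in>I. \<Sum>s\<in>I. cnj (v r) * A r s * v s)"

lemma psd_on_qf: "psd_on I A \<longleftrightarrow> (\<forall>v. Im (qf I A v) = 0 \<and> Re (qf I A v) \<ge> 0)"
  by (simp add: psd_on_def qf_def Let_def)

lemma qf_restrict:
  assumes "finite I" "S \<subseteq> I" "\<forall>x\<in>I - S. v x = 0"
  shows "qf I A v = qf S A v"
proof -
  have "qf I A v = (\<Sum>r\<in>I. \<Sum>s\<in>S. cnj (v r) * A r s * v s)"
    unfolding qf_def
    by (rule sum.cong[OF refl], rule sum.mono_neutral_right) (use assms in auto)
  also have "\<dots> = qf S A v" unfolding qf_def
    by (rule sum.mono_neutral_right) (use assms in \<open>auto intro!: sum.neutral\<close>)
  finally show ?thesis .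
qed

lemma qf_pair: "r \<noteq> s \<Longrightarrow> qf {r,s} A v = cnj (v r) * A r r * v r + cnj (v r) * A r s * v s
   + cnj (v s) * A s r * v r + cnj (v s) * A s s * v s"
  by (simp add: qf_def)

lemma qf_single: "qf {r} A v = cnj (v r) * A r r * v r"
  by (simp add: qf_def)

lemma psd_diag:
  assumes "psd_on I A" "finite I" "r \<in> I"
  shows "Im (A r r) = 0" "Re (A r r) \<ge> 0"
proof -
  let ?v = "\<lambda>x. if x = r then 1 else (0::complex)"
  have "qf I A ?v = qf {r} A ?v" by (rule qf_restrict) (use assms in auto)
  also have "\<dots> = A r r" by (simp add: qf_single)
  finally have "qf I A ?v = A r r" .
  with assms(1) show "Im (A r r) = 0" "Re (A r r) \<ge> 0" unfolding psd_on_qf by metis+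
qed

lemma psd_herm:
  assumes "psd_on I A" "finite I" "r \<in> I" "s \<in> I"
  shows "A s r = cnj (A r s)"
proof (cases "r = s")
  case True
  then show ?thesis using psd_diag[OF assms(1,2,3)] by (simp add: complex_eq_iff)
next
  case False
  let ?v1 = "\<lambda>x. if x = r then 1 else if x = s then 1 else (0::complex)"
  let ?v2 = "\<lambda>x. if x = r then 1 else if x = s then \<i> else (0::complex)"
  have "qf I A ?v1 = qf {r,s} A ?v1" by (rule qf_restrict) (use assms in auto)
  also have "\<dots> = A r r + A r s + A s r + A s s" using False by (simp add: qf_pair)
  finally have 1: "Im (A r r + A r s + A s r + A s s) = 0" using assms(1) unfolding psd_on_qf by metis
  have "qf I A ?v2 = qf {r,s} A ?v2" by (rule qf_restrict) (use assms in auto)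
  also have "\<dots> = A r r + \<i> * A r s - \<i> * A s r + A s s" using False by (simp add: qf_pair algebra_simps)
  finally have 2: "Im (A r r + \<i> * A r s - \<i> * A s r + A s s) = 0" using assms(1) unfolding psd_on_qf by metis
  have 3: "Im (A r r) = 0" "Im (A s s) = 0" using psd_diag[OF assms(1,2)] assms by auto
  show ?thesis using 1 2 3 by (simp add: complex_eq_iff)
qed


lemma psd_mono:
  assumes "psd_on J A" "I \<subseteq> J" "finite J"
  shows "psd_on I A"
  unfolding psd_on_qf
proof
  fix v
  let ?v = "\<lambda>x. if x \<in> I then v x else (0::complex)"
  have "qf J A ?v = qf I A ?v" by (rule qf_restrict) (use assms in auto)
  also have "\<dots> = qf I A v" unfolding qf_def by (intro sum.cong) auto
  finally show "Im (qf I A v) = 0 \<and> 0 \<le> Re (qf I A v)" using assms(1) unfolding psd_on_qf by metis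
qed

lemma psd_offdiag_zero:
  assumes "psd_on I A" "finite I" "p \<in> I" "A p p = 0" "r \<in> I"
  shows "A r p = 0"
proof (rule ccontr)
  assume ne: "A r p \<noteq> 0"
  then have rp: "r \<noteq> p" using assms by auto
  define c where "c = Re (A r r) + 1"
  define t where "t = - of_real c / A r p"
  let ?v = "\<lambda>x. if x = r then 1 else if x = p then t else (0::complex)"
  have h: "A p r = cnj (A r p)" by (rule psd_herm) (use assms in auto)
  have "qf I A ?v = qf {r,p} A ?v" by (rule qf_restrict) (use assms in auto)
  also have "\<dots> = A r r + A r p * t + cnj t * A p r" using rp assms(4) by (simp add: qf_pair)
  also have "\<dots> = A r r - 2 * of_real c"
  proof -
    have e1: "A r p * t = - of_real c" using ne by (simp add: t_def)
    have "cnj t * A p r = cnj (A r p * t)" by (simp add: h mult.commute)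
    then have "cnj t * A p r = - of_real c" using e1 by simp
    then show ?thesis using e1 by simp
  qed
  finally have "Re (qf I A ?v) = Re (A r r) - 2 * c" by simp
  moreover have "Re (A r r) \<ge> 0" using psd_diag[OF assms(1,2,5)] by simp
  ultimately have "Re (qf I A ?v) < 0" unfolding c_def by simp
  then show False using assms(1) unfolding psd_on_qf by (metis not_le)
qed


lemma psd_schur:
  assumes psd: "psd_on (insert p I) A" and fin: "finite I" and pI: "p \<notin> I" and pos: "A p p \<noteq> 0"
  shows "psd_on I (\<lambda>r s. A r s - A r p * cnj (A s p) / A p p)"
  unfolding psd_on_qf
proof
  fix v
  let ?B = "\<lambda>r s. A r s - A r p * cnj (A s p) / A p p"
  define X where "X = (\<Sum>s\<in>I. A p s * v s)"
  define Y where "Y = (\<Sum>r\<in>I. cnj (v r) * A r p)"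
  define t where "t = - X / A p p"
  define v' where "v' = (\<lambda>x. if x = p then t else v x)"
  have fin': "finite (insert p I)" using fin by simp
  have herm: "\<And>r s. r \<in> insert p I \<Longrightarrow> s \<in> insert p I \<Longrightarrow> A s r = cnj (A r s)"
    using psd_herm[OF psd fin'] by blast
  have cpp: "cnj (A p p) = A p p" using herm[of p p] by simp
  have cX: "cnj X = Y"
  proof -
    have "cnj X = (\<Sum>s\<in>I. cnj (A p s) * cnj (v s))" by (simp add: X_def)
    also have "\<dots> = (\<Sum>s\<in>I. cnj (v s) * A s p)"
    proof (rule sum.cong[OF refl])
      fix s assume "s \<in> I" thus "cnj (A p s) * cnj (v s) = cnj (v s) * A s p" using herm[of p s] by simp
    qed
    finally show ?thesis by (simp add: Y_def)
  qed
  have ct: "cnj t = - Y / A p p" unfolding t_def using cX cpp by simp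
  have v'I: "\<And>x. x \<in> I \<Longrightarrow> v' x = v x" unfolding v'_def using pI by auto
  have "qf (insert p I) A v' = cnj t * A p p * t + cnj t * X + Y * t + qf I A v"
  proof -
    have "qf (insert p I) A v' = (\<Sum>s\<in>insert p I. cnj (v' p) * A p s * v' s)
        + (\<Sum>r\<in>I. \<Sum>s\<in>insert p I. cnj (v' r) * A r s * v' s)"
      unfolding qf_def using fin pI by simp
    also have "(\<Sum>s\<in>insert p I. cnj (v' p) * A p s * v' s) = cnj t * A p p * t + cnj t * X"
      using fin pI v'I by (simp add: v'_def X_def sum_distrib_left mult.assoc)
    also have "(\<Sum>r\<in>I. \<Sum>s\<in>insert p I. cnj (v' r) * A r s * v' s)
        = (\<Sum>r\<in>I. cnj (v r) * A r p * t + (\<Sum>s\<in>I. cnj (v r) * A r s * v s))"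
      using fin pI v'I by (intro sum.cong refl) (simp add: v'_def)
    also have "\<dots> = Y * t + qf I A v"
      by (simp add: sum.distrib Y_def qf_def sum_distrib_right)
    finally show ?thesis by simp
  qed
  also have "\<dots> = qf I ?B v"
  proof -
    have "qf I ?B v = qf I A v - (\<Sum>r\<in>I. \<Sum>s\<in>I. cnj (v r) * (A r p * cnj (A s p) / A p p) * v s)"
      unfolding qf_def by (simp add: algebra_simps sum_subtractf)
    also have "(\<Sum>r\<in>I. \<Sum>s\<in>I. cnj (v r) * (A r p * cnj (A s p) / A p p) * v s)
       = Y * X / A p p"
    proof -
      have "(\<Sum>r\<in>I. \<Sum>s\<in>I. cnj (v r) * (A r p * cnj (A s p) / A p p) * v s)
         = (\<Sum>r\<in>I. \<Sum>s\<in>I. (cnj (v r) * A r p) * (A p s * v s) / A p p)"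
      proof (intro sum.cong refl)
        fix r s assume "s \<in> I" then have "cnj (A s p) = A p s" using herm[of p s] by simp
        then show "cnj (v r) * (A r p * cnj (A s p) / A p p) * v s = (cnj (v r) * A r p) * (A p s * v s) / A p p"
          by simp
      qed
      also have "\<dots> = Y * X / A p p"
        by (simp add: Y_def X_def sum_distrib_left sum_distrib_right sum_divide_distrib) (rule sum.swap)
      finally show ?thesis .
    qed
    finally have "qf I ?B v = qf I A v - Y * X / A p p" .
    moreover have "cnj t * A p p * t + cnj t * X + Y * t = - Y * X / A p p"
      using pos unfolding ct t_def by (simp add: field_simps)
    ultimately show ?thesis by simp
  qed
  finally have "qf (insert p I) A v' = qf I ?B v" .
  then show "Im (qf I ?B v) = 0 \<and> 0 \<le> Re (qf I ?B v)" using psd unfolding psd_on_qf by metis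
qed


lemma psd_decomp:
  "finite I \<Longrightarrow> psd_on I A \<Longrightarrow> \<exists>ws. \<forall>r\<in>I. \<forall>s\<in>I. A r s = (\<Sum>w\<leftarrow>ws. w r * cnj (w s))"
proof (induction I arbitrary: A rule: finite_induct)
  case empty
  then show ?case by auto
next
  case (insert p I A)
  have fin': "finite (insert p I)" using insert by simp
  have herm: "\<And>r s. r \<in> insert p I \<Longrightarrow> s \<in> insert p I \<Longrightarrow> A s r = cnj (A r s)"
    using psd_herm[OF insert.prems fin'] by blast
  define z where "z = (\<lambda>(w::'a \<Rightarrow> complex) x. if x = p then 0 else w x)"
  show ?case
  proof (cases "A p p = 0")
    case True
    have "psd_on I A" by (rule psd_mono[OF insert.prems _ fin']) auto
    then obtain ws where ws: "\<forall>r\<in>I. \<forall>s\<in>I. A r s = (\<Sum>w\<leftarrow>ws. w r * cnj (w s))"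
      using insert.IH by blast
    have col: "\<And>s. s \<in> insert p I \<Longrightarrow> A s p = 0"
      using psd_offdiag_zero[OF insert.prems fin' _ True] by blast
    have row: "\<And>s. s \<in> insert p I \<Longrightarrow> A p s = 0"
      using col herm by (metis complex_cnj_zero insertI1)
    have "\<forall>r\<in>insert p I. \<forall>s\<in>insert p I. A r s = (\<Sum>w\<leftarrow>map z ws. w r * cnj (w s))"
    proof (intro ballI)
      fix r s assume r: "r \<in> insert p I" and s: "s \<in> insert p I"
      show "A r s = (\<Sum>w\<leftarrow>map z ws. w r * cnj (w s))"
      proof (cases "r = p \<or> s = p")
        case True
        then show ?thesis using row col r s by (auto simp: z_def o_def)
      next
        case False
        then show ?thesis using ws r s by (simp add: z_def o_def)
      qed
    qed
    then show ?thesis by blast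
  next
    case False
    let ?B = "\<lambda>r s. A r s - A r p * cnj (A s p) / A p p"
    have "psd_on I ?B" by (rule psd_schur) (use insert.prems insert.hyps False in auto)
    then obtain ws where ws: "\<forall>r\<in>I. \<forall>s\<in>I. ?B r s = (\<Sum>w\<leftarrow>ws. w r * cnj (w s))"
      using insert.IH by blast
    define c where "c = Re (A p p)"
    have "Im (A p p) = 0" using psd_diag[OF insert.prems fin'] by simp
    then have Ac: "A p p = of_real c" unfolding c_def by (simp add: complex_eq_iff)
    have "c \<ge> 0" using psd_diag[OF insert.prems fin'] unfolding c_def by simp
    with False Ac have cpos: "c > 0" by auto
    define w0 where "w0 = (\<lambda>x. A x p / of_real (sqrt c))"
    have w0: "w0 r * cnj (w0 s) = A r p * cnj (A s p) / A p p" for r s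
    proof -
      have "w0 r * cnj (w0 s) = A r p * cnj (A s p) / (of_real (sqrt c) * of_real (sqrt c))"
        unfolding w0_def by simp
      also have "of_real (sqrt c) * of_real (sqrt c) = (of_real c :: complex)"
        using cpos by (simp flip: of_real_mult)
      finally show ?thesis using Ac by simp
    qed
    have "\<forall>r\<in>insert p I. \<forall>s\<in>insert p I. A r s = (\<Sum>w\<leftarrow>w0 # map z ws. w r * cnj (w s))"
    proof (intro ballI)
      fix r s assume r: "r \<in> insert p I" and s: "s \<in> insert p I"
      have zs: "(\<Sum>w\<leftarrow>map z ws. w r * cnj (w s)) = (if r = p \<or> s = p then 0 else ?B r s)"
      proof (cases "r = p \<or> s = p")
        case True then show ?thesis by (auto simp: z_def o_def)
      next
        case False then show ?thesis using ws r s by (simp add: z_def o_def)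
      qed
      show "A r s = (\<Sum>w\<leftarrow>w0 # map z ws. w r * cnj (w s))"
      proof (cases "r = p")
        case True
        have "cnj (A s p) = A p s" using herm[OF s, of p] by simp
        then show ?thesis using zs w0 False True by simp
      next
        case rp: False
        show ?thesis
        proof (cases "s = p")
          case True
          then show ?thesis using zs w0 False rp Ac by simp
        next
          case False
          then show ?thesis using zs w0 rp by simp
        qed
      qed
    qed
    then show ?thesis by blast
  qed
qed


lemma onb2_alg:
  fixes a b c e :: complex
  assumes "cnj a * a + cnj b * b = 1" "cnj c * c + cnj e * e = 1" "cnj a * c + cnj b * e = 0"
  shows "a * cnj a + c * cnj c = 1 \<and> b * cnj b + e * cnj e = 1 \<and> a * cnj b + c * cnj e = 0 \<and> b * cnj a + e * cnj c = 0"
proof -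
  have h4: "cnj c * a + cnj e * b = 0" using arg_cong[OF assms(3), of cnj] by (simp add: mult.commute)
  show ?thesis using assms h4 by algebra
qed

lemma lt2: "(k::nat) < 2 \<longleftrightarrow> k = 0 \<or> k = 1" by auto

lemma sum2: "(\<Sum>k<2. f k) = f 0 + f (1::nat)"
  by (simp add: numeral_2_eq_2)

lemma inner2_eq: "inner2 u v = cnj (u 0) * v 0 + cnj (u 1) * v 1"
  by (simp add: inner2_def sum2)

definition onb2 :: "(nat \<Rightarrow> complex) \<Rightarrow> (nat \<Rightarrow> complex) \<Rightarrow> bool" where
  "onb2 u0 u1 \<longleftrightarrow> inner2 u0 u0 = 1 \<and> inner2 u1 u1 = 1 \<and> inner2 u0 u1 = 0"

lemma inner2_cnj: "inner2 v u = cnj (inner2 u v)"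
  by (simp add: inner2_eq mult.commute)

lemma onb2_sym: "onb2 u0 u1 \<Longrightarrow> onb2 u1 u0"
  unfolding onb2_def by (metis complex_cnj_zero inner2_cnj)

lemma compl2:
  assumes "onb2 u0 u1" "k < 2" "t < 2"
  shows "u0 k * cnj (u0 t) + u1 k * cnj (u1 t) = (if k = t then 1 else 0)"
proof -
  have "u0 0 * cnj (u0 0) + u1 0 * cnj (u1 0) = 1 \<and> u0 1 * cnj (u0 1) + u1 1 * cnj (u1 1) = 1 \<and>
    u0 0 * cnj (u0 1) + u1 0 * cnj (u1 1) = 0 \<and> u0 1 * cnj (u0 0) + u1 1 * cnj (u1 0) = 0"
    by (rule onb2_alg) (use assms(1) in \<open>simp_all add: onb2_def inner2_eq\<close>)
  moreover have "k = 0 \<or> k = 1" "t = 0 \<or> t = 1" using assms(2,3) by auto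
  ultimately show ?thesis by (elim disjE) simp_all
qed

lemma expand2:
  assumes "onb2 u0 u1" "k < 2"
  shows "z k = inner2 u0 z * u0 k + inner2 u1 z * u1 k"
proof -
  have "inner2 u0 z * u0 k + inner2 u1 z * u1 k
      = (u0 k * cnj (u0 0) + u1 k * cnj (u1 0)) * z 0 + (u0 k * cnj (u0 1) + u1 k * cnj (u1 1)) * z 1"
    by (simp add: inner2_eq algebra_simps)
  also have "\<dots> = z k"
  proof -
    have "k = 0 \<or> k = 1" using assms(2) by auto
    then show ?thesis using compl2[OF assms(1) assms(2), of 0] compl2[OF assms(1) assms(2), of 1]
      by (elim disjE) simp_all
  qed
  finally show ?thesis by simp
qed

lemma psd_decomp2:
  assumes "finite I" "psd_on I A"
  shows "\<exists>(n::nat) W. \<forall>r\<in>I. \<forall>s\<in>I. A r s = (\<Sum>m<n. W m r * cnj (W m s))"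
proof -
  obtain ws where ws: "\<forall>r\<in>I. \<forall>s\<in>I. A r s = (\<Sum>w\<leftarrow>ws. w r * cnj (w s))"
    using psd_decomp[OF assms] by blast
  have "(\<Sum>w\<leftarrow>ws. w r * cnj (w s)) = (\<Sum>m<length ws. (ws ! m) r * cnj ((ws ! m) s))" for r s
    by (simp add: sum_list_sum_nth atLeast0LessThan)
  then have h: "\<forall>r\<in>I. \<forall>s\<in>I. A r s = (\<Sum>m<length ws. (ws ! m) r * cnj ((ws ! m) s))" using ws by simp
  show ?thesis by (rule exI[of _ "length ws"], rule exI[of _ "\<lambda>m. ws ! m"], rule h)
qed

lemma qf_decomp:
  fixes n :: nat
  assumes "finite I" "\<forall>r\<in>I. \<forall>s\<in>I. A r s = (\<Sum>m<n. W m r * cnj (W m s))"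
  shows "qf I A v = (\<Sum>m<n. of_real ((cmod (\<Sum>r\<in>I. cnj (v r) * W m r))^2))"
proof -
  have "qf I A v = (\<Sum>r\<in>I. \<Sum>s\<in>I. \<Sum>m<n. (cnj (v r) * W m r) * (v s * cnj (W m s)))"
    unfolding qf_def
  proof (intro sum.cong refl)
    fix r s assume "r \<in> I" "s \<in> I"
    then have "A r s = (\<Sum>m<n. W m r * cnj (W m s))" using assms(2) by blast
    then show "cnj (v r) * A r s * v s = (\<Sum>m<n. (cnj (v r) * W m r) * (v s * cnj (W m s)))"
      by (simp add: sum_distrib_left sum_distrib_right algebra_simps)
  qed
  also have "\<dots> = (\<Sum>m<n. (\<Sum>r\<in>I. cnj (v r) * W m r) * (\<Sum>s\<in>I. v s * cnj (W m s)))"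
    apply (subst sum.swap)
    apply (subst (2) sum.swap)
    by (simp add: sum_product)
  also have "\<dots> = (\<Sum>m<n. of_real ((cmod (\<Sum>r\<in>I. cnj (v r) * W m r))^2))"
  proof (intro sum.cong refl)
    fix m
    have cc: "(\<Sum>s\<in>I. v s * cnj (W m s)) = cnj (\<Sum>r\<in>I. cnj (v r) * W m r)" by (simp add: mult.commute)
    show "(\<Sum>r\<in>I. cnj (v r) * W m r) * (\<Sum>s\<in>I. v s * cnj (W m s)) = of_real ((cmod (\<Sum>r\<in>I. cnj (v r) * W m r))^2)"
      unfolding complex_norm_square cc by (rule refl)
  qed
  finally show ?thesis .
qed


lemma keyK:
  assumes dens: "density_on {..<2} \<rho>" and onb: "onb2 u0 u1" and z: "Re (qf {..<2} \<rho> u0) = 0"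
  shows "Re (qf {..<2} \<rho> g) = (cmod (inner2 g u1))^2"
proof -
  have psd: "psd_on {..<2} \<rho>" and tr: "mtrace {..<2} \<rho> = 1" using dens by (auto simp: density_on_def)
  obtain n :: nat and W where W: "\<forall>r\<in>{..<2}. \<forall>s\<in>{..<2}. \<rho> r s = (\<Sum>m<n. W m r * cnj (W m s))"
    using psd_decomp2[OF _ psd] by blast
  have Req: "Re (qf {..<2} \<rho> v) = (\<Sum>m<n. (cmod (inner2 v (W m)))^2)" for v
    using qf_decomp[OF _ W, of v] by (simp add: inner2_def Re_sum)
  have "(\<Sum>m<n. (cmod (inner2 u0 (W m)))^2) = 0" using z Req by simp
  then have u0W: "\<forall>m<n. inner2 u0 (W m) = 0"
    by (subst (asm) sum_nonneg_eq_0_iff) auto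
  define c where "c m = inner2 u1 (W m)" for m
  have Wm: "\<And>m k. m < n \<Longrightarrow> k < 2 \<Longrightarrow> W m k = c m * u1 k"
  proof -
    fix m k :: nat assume "m < n" "k < 2"
    then show "W m k = c m * u1 k" using expand2[OF onb, of k "W m"] u0W unfolding c_def by simp
  qed
  have gi: "inner2 g (W m) = c m * inner2 g u1" if "m < n" for m
    using Wm[OF that, of 0] Wm[OF that, of 1] by (simp add: inner2_eq algebra_simps)
  have u11: "inner2 u1 u1 = 1" using onb by (simp add: onb2_def)
  have "mtrace {..<2} \<rho> = (\<Sum>m<n. W m 0 * cnj (W m 0) + W m 1 * cnj (W m 1))"
    using W by (simp add: mtrace_def sum2 sum.distrib)
  also have "\<dots> = (\<Sum>m<n. cnj (c m) * c m * inner2 u1 u1)"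
  proof (intro sum.cong refl)
    fix m assume "m \<in> {..<n}"
    then show "W m 0 * cnj (W m 0) + W m 1 * cnj (W m 1) = cnj (c m) * c m * inner2 u1 u1"
      using Wm[of m 0] Wm[of m 1] by (simp add: inner2_eq algebra_simps)
  qed
  also have "\<dots> = (\<Sum>m<n. c m * cnj (c m))"
    using u11 by (simp add: mult.commute)
  finally have "Re (\<Sum>m<n. c m * cnj (c m)) = 1" using tr by simp
  then have "(\<Sum>m<n. (cmod (c m))^2) = 1"
    by (simp add: Re_sum complex_mult_cnj cmod_power2)
  moreover have "Re (qf {..<2} \<rho> g) = (\<Sum>m<n. (cmod (c m))^2) * (cmod (inner2 g u1))^2"
    unfolding Req sum_distrib_right
    by (intro sum.cong refl) (simp add: gi norm_mult power_mult_distrib)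
  ultimately show ?thesis by simp
qed


definition TT :: "nat \<Rightarrow> (nat \<Rightarrow> nat \<Rightarrow> complex) \<Rightarrow> (nat \<times> nat \<Rightarrow> nat \<times> nat \<Rightarrow> complex) \<Rightarrow> (nat \<Rightarrow> complex) \<Rightarrow> complex" where
  "TT d M \<rho> v = mtrace {..<2} (mmult {..<2} (proj v) (ptraceA d M \<rho>))"

definition tau :: "nat \<Rightarrow> (nat \<times> nat \<Rightarrow> nat \<times> nat \<Rightarrow> complex) \<Rightarrow> (nat \<Rightarrow> complex) \<Rightarrow> nat \<Rightarrow> nat \<Rightarrow> complex" where
  "tau d \<rho> v j i = (\<Sum>t<2. \<Sum>k<2. cnj (v t) * \<rho> (j, t) (i, k) * v k)"

lemma TT_tau: "TT d M \<rho> v = (\<Sum>i<d. \<Sum>j<d. M i j * tau d \<rho> v j i)"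
  unfolding TT_def tau_def mtrace_def mmult_def proj_def ptraceA_def
  by (simp add: sum2 sum.distrib sum_distrib_left algebra_simps)


lemma sum_prod: "(\<Sum>r\<in>A\<times>B. f r) = (\<Sum>a\<in>A. \<Sum>b\<in>B. f (a,b))"
  by (simp add: sum.cartesian_product)

lemma qf_tau: "qf {..<d} (tau d \<rho> v) w = qf (joint_idx d) \<rho> (\<lambda>(i,k). w i * v k)"
  unfolding qf_def tau_def joint_idx_def sum_prod
  by (simp add: sum2 sum.distrib sum_distrib_left sum_distrib_right algebra_simps)

lemma psd_tau: "psd_on (joint_idx d) \<rho> \<Longrightarrow> psd_on {..<d} (tau d \<rho> v)"
  unfolding psd_on_qf qf_tau by blast


lemma tr_psd_nonneg:
  fixes d :: nat
  assumes A: "psd_on {..<d} A" and B: "psd_on {..<d} B"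
  shows "Re (\<Sum>i<d. \<Sum>j<d. A i j * B j i) \<ge> 0"
proof -
  obtain n :: nat and W where W: "\<forall>r\<in>{..<d}. \<forall>s\<in>{..<d}. A r s = (\<Sum>m<n. W m r * cnj (W m s))"
    using psd_decomp2[OF finite_lessThan A] by blast
  have "(\<Sum>i<d. \<Sum>j<d. A i j * B j i) = (\<Sum>i<d. \<Sum>j<d. \<Sum>m<n. cnj (W m j) * B j i * W m i)"
  proof (intro sum.cong refl)
    fix i j assume "i \<in> {..<d}" "j \<in> {..<d}"
    then have "A i j = (\<Sum>m<n. W m i * cnj (W m j))" using W by blast
    then show "A i j * B j i = (\<Sum>m<n. cnj (W m j) * B j i * W m i)"
      by (simp add: sum_distrib_left sum_distrib_right algebra_simps)
  qed
  also have "\<dots> = (\<Sum>i<d. \<Sum>m<n. \<Sum>j<d. cnj (W m j) * B j i * W m i)"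
    by (rule sum.cong[OF refl], rule sum.swap)
  also have "\<dots> = (\<Sum>m<n. \<Sum>i<d. \<Sum>j<d. cnj (W m j) * B j i * W m i)"
    by (rule sum.swap)
  also have "\<dots> = (\<Sum>m<n. qf {..<d} B (W m))"
    unfolding qf_def by (rule sum.cong[OF refl], rule sum.swap)
  finally have "Re (\<Sum>i<d. \<Sum>j<d. A i j * B j i) = (\<Sum>m<n. Re (qf {..<d} B (W m)))"
    by (simp add: Re_sum)
  also have "\<dots> \<ge> 0" using B unfolding psd_on_qf by (intro sum_nonneg) auto
  finally show ?thesis .
qed

lemma TT_nonneg:
  assumes "psd_on {..<d} M" "psd_on (joint_idx d) \<rho>"
  shows "Re (TT d M \<rho> v) \<ge> 0"
  unfolding TT_tau by (rule tr_psd_nonneg[OF assms(1) psd_tau[OF assms(2)]])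


lemma TT_sumM:
  assumes "\<forall>i<d. \<forall>j<d. M0 i j + M1 i j = (if i = j then 1 else 0)"
  shows "TT d M0 \<rho> v + TT d M1 \<rho> v = (\<Sum>i<d. tau d \<rho> v i i)"
proof -
  have "TT d M0 \<rho> v + TT d M1 \<rho> v = (\<Sum>i<d. \<Sum>j<d. (M0 i j + M1 i j) * tau d \<rho> v j i)"
    unfolding TT_tau by (simp add: sum.distrib algebra_simps)
  also have "\<dots> = (\<Sum>i<d. \<Sum>j<d. (if i = j then tau d \<rho> v j i else 0))"
    using assms by (intro sum.cong refl) auto
  also have "\<dots> = (\<Sum>i<d. tau d \<rho> v i i)" by simp
  finally show ?thesis .
qed

lemma tau_sum_onb:
  assumes "onb2 u0 u1"
  shows "tau d \<rho> u0 i i + tau d \<rho> u1 i i = (\<Sum>t<2. \<rho> (i,t) (i,t))"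
proof -
  have c: "\<And>k t. k < 2 \<Longrightarrow> t < 2 \<Longrightarrow> cnj (u0 t) * u0 k + cnj (u1 t) * u1 k = (if k = t then 1 else 0)"
    using compl2[OF assms] by (simp add: mult.commute)
  have "tau d \<rho> u0 i i + tau d \<rho> u1 i i =
     (cnj (u0 0) * u0 0 + cnj (u1 0) * u1 0) * \<rho> (i,0) (i,0) +
     (cnj (u0 0) * u0 1 + cnj (u1 0) * u1 1) * \<rho> (i,0) (i,1) +
     (cnj (u0 1) * u0 0 + cnj (u1 1) * u1 0) * \<rho> (i,1) (i,0) +
     (cnj (u0 1) * u0 1 + cnj (u1 1) * u1 1) * \<rho> (i,1) (i,1)"
    unfolding tau_def by (simp add: sum2 algebra_simps)
  also have "\<dots> = \<rho> (i,0) (i,0) + \<rho> (i,1) (i,1)"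
    using c[of 0 0] c[of 0 1] c[of 1 0] c[of 1 1] by simp
  finally show ?thesis by (simp add: sum2)
qed

lemma TT_norm:
  assumes "\<forall>i<d. \<forall>j<d. M0 i j + M1 i j = (if i = j then 1 else 0)" "onb2 u0 u1"
    "mtrace (joint_idx d) \<rho> = 1"
  shows "TT d M0 \<rho> u0 + TT d M0 \<rho> u1 + TT d M1 \<rho> u0 + TT d M1 \<rho> u1 = 1"
proof -
  have "TT d M0 \<rho> u0 + TT d M0 \<rho> u1 + TT d M1 \<rho> u0 + TT d M1 \<rho> u1
     = (TT d M0 \<rho> u0 + TT d M1 \<rho> u0) + (TT d M0 \<rho> u1 + TT d M1 \<rho> u1)" by simp
  also have "\<dots> = (\<Sum>i<d. tau d \<rho> u0 i i + tau d \<rho> u1 i i)"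
    unfolding TT_sumM[OF assms(1)] by (simp add: sum.distrib)
  also have "\<dots> = (\<Sum>i<d. \<Sum>t<2. \<rho> (i,t) (i,t))"
    using tau_sum_onb[OF assms(2)] by simp
  also have "\<dots> = mtrace (joint_idx d) \<rho>"
    unfolding mtrace_def joint_idx_def sum_prod by simp
  finally show ?thesis using assms(3) by simp
qed


lemma qf_rank1:
  assumes "finite I"
  shows "qf I (\<lambda>r s. z r * cnj (z s)) v = of_real ((cmod (\<Sum>r\<in>I. cnj (v r) * z r))^2)"
proof -
  have "qf I (\<lambda>r s. z r * cnj (z s)) v = (\<Sum>r\<in>I. cnj (v r) * z r) * (\<Sum>s\<in>I. cnj (z s) * v s)"
    unfolding qf_def sum_product by (simp add: algebra_simps)
  also have "(\<Sum>s\<in>I. cnj (z s) * v s) = cnj (\<Sum>r\<in>I. cnj (v r) * z r)" by (simp add: mult.commute)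
  finally show ?thesis by (simp only: complex_norm_square)
qed

lemma psd_rank1: "finite I \<Longrightarrow> psd_on I (\<lambda>r s. z r * cnj (z s))"
  unfolding psd_on_qf qf_rank1 by simp

lemma qf_lin: "qf I (\<lambda>r s. a * A r s + b * B r s) v = a * qf I A v + b * qf I B v"
  unfolding qf_def by (simp add: sum.distrib sum_distrib_left algebra_simps)

lemma psd_lin:
  assumes "psd_on I A" "psd_on I B" "a \<ge> 0" "b \<ge> 0"
  shows "psd_on I (\<lambda>r s. of_real a * A r s + of_real b * B r s)"
  using assms unfolding psd_on_qf qf_lin by simp

lemma mtrace_lin: "mtrace I (\<lambda>r s. a * A r s + b * B r s) = a * mtrace I A + b * mtrace I B"
  unfolding mtrace_def by (simp add: sum.distrib sum_distrib_left)

lemma TT_lin: "TT d M (\<lambda>r s. a * A r s + b * B r s) v = a * TT d M A v + b * TT d M B v"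
  unfolding TT_tau tau_def by (simp add: sum.distrib sum_distrib_left algebra_simps)

lemma tr_proj_qf: "mtrace {..<2} (mmult {..<2} (proj v) \<rho>) = qf {..<2} \<rho> v"
  unfolding mtrace_def mmult_def proj_def qf_def by (simp add: sum2 algebra_simps)

lemma qf_proj: "qf {..<2} (proj u) v = of_real ((cmod (inner2 v u))^2)"
  unfolding proj_def inner2_def by (rule qf_rank1) simp

lemma density_proj: "inner2 u u = 1 \<Longrightarrow> density_on {..<2} (proj u)"
  unfolding density_on_def proj_def
  by (auto simp: psd_rank1 mtrace_def inner2_def mult.commute)

lemma TT_rank1_2:
  "TT 2 (proj m) (\<lambda>r s. z r * cnj (z s)) v
     = of_real ((cmod (\<Sum>j<2. \<Sum>t<2. cnj (m j) * cnj (v t) * z (j,t)))^2)"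
  unfolding TT_tau tau_def proj_def complex_norm_square
  by (simp add: sum2 algebra_simps)


lemma bits_iff: "x \<in> bits \<longleftrightarrow> x = 0 \<or> x = 1" by (auto simp: bits_def)

definition Phi :: "nat \<times> nat \<Rightarrow> complex" where
  "Phi = (\<lambda>(i,k). if i = k then of_real (1 / sqrt 2) else 0)"

definition zl :: "(nat \<Rightarrow> complex) \<Rightarrow> nat \<times> nat \<Rightarrow> complex" where
  "zl f = (\<lambda>(i,k). cnj (f i) * f k)"

lemma TT_Phi: "TT 2 (proj (\<lambda>k. cnj (u k))) (\<lambda>r s. Phi r * cnj (Phi s)) v = of_real ((cmod (inner2 v u))^2 / 2)"
proof -
  have "(\<Sum>j<2. \<Sum>t<2. cnj (cnj (u j)) * cnj (v t) * Phi (j,t)) = inner2 v u * of_real (1 / sqrt 2)"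
    by (simp add: sum2 Phi_def inner2_eq algebra_simps)
  then have "TT 2 (proj (\<lambda>k. cnj (u k))) (\<lambda>r s. Phi r * cnj (Phi s)) v
     = of_real ((cmod (inner2 v u * of_real (1 / sqrt 2)))^2)"
    by (simp only: TT_rank1_2)
  also have "(cmod (inner2 v u * of_real (1 / sqrt 2)))^2 = (cmod (inner2 v u))^2 / 2"
    by (simp add: norm_mult norm_divide power_mult_distrib power_divide)
  finally show ?thesis .
qed

lemma TT_zl: "TT 2 (proj (\<lambda>k. cnj (u k))) (\<lambda>r s. zl f r * cnj (zl f s)) v
   = of_real ((cmod (inner2 f u))^2 * (cmod (inner2 v f))^2)"
proof -
  have "(\<Sum>j<2. \<Sum>t<2. cnj (cnj (u j)) * cnj (v t) * zl f (j,t)) = inner2 f u * inner2 v f"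
    by (simp add: sum2 zl_def inner2_eq algebra_simps)
  then have "TT 2 (proj (\<lambda>k. cnj (u k))) (\<lambda>r s. zl f r * cnj (zl f s)) v
     = of_real ((cmod (inner2 f u * inner2 v f))^2)"
    by (simp only: TT_rank1_2)
  then show ?thesis by (simp add: norm_mult power_mult_distrib)
qed

lemma inner2_self_cmod: "inner2 u u = 1 \<Longrightarrow> (cmod (u 0))^2 + (cmod (u 1))^2 = 1"
proof -
  assume "inner2 u u = 1"
  then have "Re (cnj (u 0) * u 0 + cnj (u 1) * u 1) = 1" by (simp add: inner2_eq)
  then show ?thesis unfolding cmod_power2 by (simp add: power2_eq_square)
qed

lemma mtrace_Phi: "mtrace (joint_idx 2) (\<lambda>r s. Phi r * cnj (Phi s)) = 1"
proof -
  have "(of_real (1 / sqrt 2) :: complex) * of_real (1 / sqrt 2) = 1/2"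
    by (simp flip: of_real_mult)
  then show ?thesis
    unfolding mtrace_def joint_idx_def sum_prod by (simp add: sum2 Phi_def)
qed

lemma mtrace_zl: "inner2 f f = 1 \<Longrightarrow> mtrace (joint_idx 2) (\<lambda>r s. zl f r * cnj (zl f s)) = 1"
proof -
  assume h: "inner2 f f = 1"
  have "mtrace (joint_idx 2) (\<lambda>r s. zl f r * cnj (zl f s)) = (cnj (f 0) * f 0 + cnj (f 1) * f 1) * (cnj (f 0) * f 0 + cnj (f 1) * f 1)"
    unfolding mtrace_def joint_idx_def sum_prod by (simp add: sum2 zl_def algebra_simps)
  then show ?thesis using h by (simp add: inner2_eq)
qed


definition uA :: "(nat \<Rightarrow> nat \<Rightarrow> nat \<Rightarrow> complex) \<Rightarrow> nat \<Rightarrow> nat \<Rightarrow> nat \<Rightarrow> complex" where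
  "uA e x a = e x (if x = 0 then a else 1 - a)"

definition Mq :: "(nat \<Rightarrow> nat \<Rightarrow> nat \<Rightarrow> complex) \<Rightarrow> nat \<Rightarrow> nat \<Rightarrow> nat \<Rightarrow> nat \<Rightarrow> complex" where
  "Mq e x a = proj (\<lambda>k. cnj (uA e x a k))"

definition rhoPhi :: "nat \<times> nat \<Rightarrow> nat \<times> nat \<Rightarrow> complex" where
  "rhoPhi = (\<lambda>r s. Phi r * cnj (Phi s))"

definition rhoC :: "(nat \<Rightarrow> nat \<Rightarrow> nat \<Rightarrow> complex) \<Rightarrow> nat \<times> nat \<Rightarrow> nat \<times> nat \<Rightarrow> complex" where
  "rhoC e = (\<lambda>r s. of_real (1/2) * (zl (e 0 0) r * cnj (zl (e 0 0) s)) + of_real (1/2) * (zl (e 0 1) r * cnj (zl (e 0 1) s)))"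

definition rhoP :: "(nat \<Rightarrow> nat \<Rightarrow> nat \<Rightarrow> complex) \<Rightarrow> real \<Rightarrow> nat \<times> nat \<Rightarrow> nat \<times> nat \<Rightarrow> complex" where
  "rhoP e V = (\<lambda>r s. of_real V * rhoPhi r s + of_real (1 - V) * rhoC e r s)"

definition PSbox :: "(nat \<Rightarrow> nat \<Rightarrow> nat \<Rightarrow> complex) \<Rightarrow> box" where
  "PSbox e = (\<lambda>a b x y. Re (TT 2 (Mq e x a) rhoPhi (e y b)))"

definition PUSbox :: box where
  "PUSbox = (\<lambda>a b x y. if x = 0 \<and> y = 0 then (if a = b then 1/2 else 0) else 1/4)"

lemma P_col_val:
  assumes "a \<in> bits" "b \<in> bits" "x \<in> bits" "y \<in> bits"
  shows "P_col_BB84 V a b x y = (if x = 0 \<and> y = 0 then (if a = b then 1/2 else 0)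
     else if x = 1 \<and> y = 1 then (if a = b then (1 - V)/4 else (1 + V)/4) else 1/4)"
  using assms unfolding bits_iff P_col_BB84_def
  by (elim disjE) (simp_all add: field_simps)

context
  fixes e :: "nat \<Rightarrow> nat \<Rightarrow> nat \<Rightarrow> complex"
  assumes mub: "MUB_pair e"
begin

lemma e_orth: "y \<in> bits \<Longrightarrow> b \<in> bits \<Longrightarrow> b' \<in> bits \<Longrightarrow> inner2 (e y b) (e y b') = (if b = b' then 1 else 0)"
  using mub unfolding MUB_pair_def by blast

lemma onb_e: "y \<in> bits \<Longrightarrow> onb2 (e y 0) (e y 1)"
  unfolding onb2_def using e_orth[of y] by (simp add: bits_def)

lemma onb_e': "y \<in> bits \<Longrightarrow> a \<in> bits \<Longrightarrow> onb2 (e y (1 - a)) (e y a)"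
  using onb_e[of y] onb2_sym[of "e y 0" "e y 1"] by (auto simp: bits_def)

lemma nq: "i \<in> bits \<Longrightarrow> j \<in> bits \<Longrightarrow> k \<in> bits \<Longrightarrow> l \<in> bits \<Longrightarrow>
  (cmod (inner2 (e i j) (e k l)))^2 = (if i = k then (if j = l then 1 else 0) else 1/2)"
proof -
  assume h: "i \<in> bits" "j \<in> bits" "k \<in> bits" "l \<in> bits"
  have m: "\<And>j l. j \<in> bits \<Longrightarrow> l \<in> bits \<Longrightarrow> (cmod (inner2 (e 0 j) (e 1 l)))^2 = 1/2"
    using mub unfolding MUB_pair_def by blast
  show ?thesis
  proof (cases "i = k")
    case True
    then show ?thesis using e_orth[of i j l] h by simp
  next
    case False
    then have "(i = 0 \<and> k = 1) \<or> (i = 1 \<and> k = 0)" using h by (auto simp: bits_def)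
    then show ?thesis
    proof
      assume "i = 0 \<and> k = 1" then show ?thesis using m[OF h(2,4)] by simp
    next
      assume "i = 1 \<and> k = 0" then show ?thesis using m[OF h(4,2)]
        by (subst inner2_cnj) (simp add: complex_mod_cnj)
    qed
  qed
qed

lemma povm_Mq: "x \<in> bits \<Longrightarrow> povm2 2 (Mq e x)"
proof -
  assume x: "x \<in> bits"
  have psd: "psd_on {..<2} (Mq e x a)" for a
    unfolding Mq_def psd_on_qf qf_proj by simp
  have c: "\<And>i j. i < 2 \<Longrightarrow> j < 2 \<Longrightarrow> e x 0 j * cnj (e x 0 i) + e x 1 j * cnj (e x 1 i) = (if j = i then 1 else 0)"
    using compl2[OF onb_e[OF x]] by blast
  have "Mq e x 0 i j + Mq e x 1 i j = (if i = j then 1 else 0)" if "i < 2" "j < 2" for i j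
  proof -
    have h: "cnj (e x 0 i) * e x 0 j + cnj (e x 1 i) * e x 1 j = (if i = j then 1 else 0)"
      using c[OF that] by (auto simp: mult.commute)
    have "x = 0 \<or> x = 1" using x by (simp add: bits_def)
    then show ?thesis
    proof
      assume "x = 0" then show ?thesis using h unfolding Mq_def uA_def proj_def by simp
    next
      assume "x = 1" then show ?thesis using h unfolding Mq_def uA_def proj_def by (simp add: add.commute)
    qed
  qed
  then show ?thesis unfolding povm2_def using psd by auto
qed

lemma dens_Phi: "density_on (joint_idx 2) rhoPhi"
  unfolding density_on_def rhoPhi_def
  using psd_rank1[of "joint_idx 2" Phi] mtrace_Phi by (simp add: joint_idx_def)

lemma dens_P:
  assumes "0 \<le> V" "V \<le> 1"
  shows "density_on (joint_idx 2) (rhoP e V)"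
proof -
  have fin: "finite (joint_idx 2)" by (simp add: joint_idx_def)
  have i0: "inner2 (e 0 0) (e 0 0) = 1" and i1: "inner2 (e 0 1) (e 0 1) = 1"
    using e_orth[of 0 0 0] e_orth[of 0 1 1] by (auto simp: bits_def)
  have pC: "psd_on (joint_idx 2) (rhoC e)"
    unfolding rhoC_def by (rule psd_lin[OF psd_rank1[OF fin] psd_rank1[OF fin]]) auto
  have tC: "mtrace (joint_idx 2) (rhoC e) = 1"
    unfolding rhoC_def mtrace_lin using mtrace_zl[OF i0] mtrace_zl[OF i1] by simp
  have "psd_on (joint_idx 2) (rhoP e V)"
    unfolding rhoP_def by (rule psd_lin) (use dens_Phi pC assms in \<open>auto simp: density_on_def\<close>)
  moreover have "mtrace (joint_idx 2) (rhoP e V) = 1"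
    unfolding rhoP_def mtrace_lin using tC dens_Phi by (simp add: density_on_def)
  ultimately show ?thesis by (simp add: density_on_def)
qed

lemma PS_val:
  assumes "a \<in> bits" "b \<in> bits" "x \<in> bits" "y \<in> bits"
  shows "PSbox e a b x y = (if x = y then (if x = 0 then (if a = b then 1/2 else 0) else (if a = b then 0 else 1/2)) else 1/4)"
proof -
  have "PSbox e a b x y = (cmod (inner2 (e y b) (uA e x a)))^2 / 2"
    unfolding PSbox_def Mq_def rhoPhi_def TT_Phi by simp
  also have "\<dots> = (if x = y then (if x = 0 then (if a = b then 1/2 else 0) else (if a = b then 0 else 1/2)) else 1/4)"
    using assms unfolding bits_iff uA_def
    by (elim disjE) (simp_all add: nq bits_def)
  finally show ?thesis .
qed

lemma P_val:
  assumes "a \<in> bits" "b \<in> bits" "x \<in> bits" "y \<in> bits"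
  shows "Re (TT 2 (Mq e x a) (rhoP e V) (e y b)) = P_col_BB84 V a b x y"
proof -
  have "Re (TT 2 (Mq e x a) (rhoP e V) (e y b)) = V * ((cmod (inner2 (e y b) (uA e x a)))^2 / 2)
     + (1 - V) * (1/2 * ((cmod (inner2 (e 0 0) (uA e x a)))^2 * (cmod (inner2 (e y b) (e 0 0)))^2)
                + 1/2 * ((cmod (inner2 (e 0 1) (uA e x a)))^2 * (cmod (inner2 (e y b) (e 0 1)))^2))"
    unfolding rhoP_def rhoC_def TT_lin rhoPhi_def Mq_def TT_Phi TT_zl by simp
  also have "\<dots> = P_col_BB84 V a b x y"
    using assms unfolding bits_iff uA_def
    by (elim disjE) (simp_all add: nq bits_def P_col_val field_simps)
  finally show ?thesis .
qed

end


context
  fixes e :: "nat \<Rightarrow> nat \<Rightarrow> nat \<Rightarrow> complex"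
  assumes mub: "MUB_pair e"
begin

lemma qb_P:
  assumes "0 \<le> V" "V \<le> 1"
  shows "quantum_box e (P_col_BB84 V)"
  unfolding quantum_box_def
proof (intro exI[of _ "2::nat"] conjI exI[of _ "rhoP e V"] exI[of _ "Mq e"])
  show "density_on (joint_idx 2) (rhoP e V)" by (rule dens_P[OF mub assms])
  show "\<forall>x\<in>bits. povm2 2 (Mq e x)" using povm_Mq[OF mub] by blast
  show "\<forall>a\<in>bits. \<forall>b\<in>bits. \<forall>x\<in>bits. \<forall>y\<in>bits. P_col_BB84 V a b x y =
     Re (mtrace {..<2} (mmult {..<2} (proj (e y b)) (ptraceA 2 (Mq e x a) (rhoP e V))))"
    using P_val[OF mub] unfolding TT_def by metis
qed simp

lemma qb_PS: "quantum_box e (PSbox e)"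
  unfolding quantum_box_def
proof (intro exI[of _ "2::nat"] conjI exI[of _ "rhoPhi"] exI[of _ "Mq e"])
  show "density_on (joint_idx 2) rhoPhi" by (rule dens_Phi[OF mub])
  show "\<forall>x\<in>bits. povm2 2 (Mq e x)" using povm_Mq[OF mub] by blast
  show "\<forall>a\<in>bits. \<forall>b\<in>bits. \<forall>x\<in>bits. \<forall>y\<in>bits. PSbox e a b x y =
     Re (mtrace {..<2} (mmult {..<2} (proj (e y b)) (ptraceA 2 (Mq e x a) rhoPhi)))"
    unfolding PSbox_def TT_def by blast
qed simp

lemma unsteer_PUS: "unsteerable e PUSbox"
  unfolding unsteerable_def
proof (rule exI[of _ "2::nat"], rule exI[of _ "\<lambda>l. 1/2"],
    rule exI[of _ "\<lambda>l x a. if x = 0 then (if a = l then 1 else 0) else 1/2"],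
    rule exI[of _ "\<lambda>l. proj (e 0 l)"], intro conjI)
  show "\<forall>l<2. density_on {..<2} (proj (e 0 l))"
    using e_orth[OF mub, of 0] by (auto intro!: density_proj simp: bits_def lt2)
  show "\<forall>a\<in>bits. \<forall>b\<in>bits. \<forall>x\<in>bits. \<forall>y\<in>bits. PUSbox a b x y =
      (\<Sum>l<2. 1 / 2 * (if x = 0 then if a = l then 1 else 0 else 1 / 2) *
             Re (mtrace {..<2} (mmult {..<2} (proj (e y b)) (proj (e 0 l)))))"
  proof (intro ballI)
    fix a b x y assume h: "a \<in> bits" "b \<in> bits" "x \<in> bits" "y \<in> bits"
    show "PUSbox a b x y =
      (\<Sum>l<2. 1 / 2 * (if x = 0 then if a = l then 1 else 0 else 1 / 2) *
             Re (mtrace {..<2} (mmult {..<2} (proj (e y b)) (proj (e 0 l)))))"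
      unfolding tr_proj_qf qf_proj using h unfolding bits_iff
      by (elim disjE) (simp_all add: sum2 PUSbox_def nq[OF mub] bits_def)
  qed
qed (auto simp: bits_def)

lemma steer_PS: "steerable e (PSbox e)"
  unfolding steerable_def
proof
  assume "unsteerable e (PSbox e)"
  then obtain n :: nat and pl :: "nat \<Rightarrow> real" and pa :: "nat \<Rightarrow> nat \<Rightarrow> nat \<Rightarrow> real"
    and rl :: "nat \<Rightarrow> nat \<Rightarrow> nat \<Rightarrow> complex" where pl: "\<forall>l<n. pl l \<ge> 0" and psum: "(\<Sum>l<n. pl l) = 1"
    and pa: "\<forall>l<n. \<forall>x\<in>bits. (\<forall>a\<in>bits. pa l x a \<ge> 0) \<and> pa l x 0 + pa l x 1 = 1"
    and rl: "\<forall>l<n. density_on {..<2} (rl l)"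
    and val: "\<forall>a\<in>bits. \<forall>b\<in>bits. \<forall>x\<in>bits. \<forall>y\<in>bits.
        PSbox e a b x y = (\<Sum>l<n. pl l * pa l x a *
                       Re (mtrace {..<2} (mmult {..<2} (proj (e y b)) (rl l))))"
    unfolding unsteerable_def by blast
  define R where "R l v = Re (qf {..<2} (rl l) v)" for l v
  have Rnn: "\<And>l v. l < n \<Longrightarrow> R l v \<ge> 0"
    using rl unfolding R_def density_on_def psd_on_qf by blast
  have val': "\<And>a b x y. a \<in> bits \<Longrightarrow> b \<in> bits \<Longrightarrow> x \<in> bits \<Longrightarrow> y \<in> bits \<Longrightarrow>
      PSbox e a b x y = (\<Sum>l<n. pl l * pa l x a * R l (e y b))"
    using val unfolding R_def tr_proj_qf by blast
  have term0: "\<And>l. l < n \<Longrightarrow> pl l * pa l x a * R l (e y b) = 0"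
    if "a \<in> bits" "b \<in> bits" "x \<in> bits" "y \<in> bits" "PSbox e a b x y = 0" for a b x y
  proof -
    have "(\<Sum>l<n. pl l * pa l x a * R l (e y b)) = 0" using val' that by simp
    moreover have "\<forall>l\<in>{..<n}. pl l * pa l x a * R l (e y b) \<ge> 0"
      using pl pa Rnn that(3,1) by (auto intro!: mult_nonneg_nonneg)
    ultimately have "\<forall>l\<in>{..<n}. pl l * pa l x a * R l (e y b) = 0"
      using sum_nonneg_eq_0_iff[of "{..<n}" "\<lambda>l. pl l * pa l x a * R l (e y b)"] by simp
    then show "\<And>l. l < n \<Longrightarrow> pl l * pa l x a * R l (e y b) = 0" by blast
  qed
  obtain l where l: "l < n" "pl l > 0"
  proof -
    have "\<exists>l<n. pl l > 0"
    proof (rule ccontr)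
      assume "\<not> (\<exists>l<n. pl l > 0)"
      then have "\<forall>l\<in>{..<n}. pl l = 0" using pl by force
      then have "(\<Sum>l<n. pl l) = 0" by simp
      then show False using psum by simp
    qed
    then show ?thesis using that by blast
  qed
  have exa: "\<exists>a\<in>bits. pa l x a > 0" if "x \<in> bits" for x
  proof (rule ccontr)
    assume "\<not> (\<exists>a\<in>bits. pa l x a > 0)"
    then have "pa l x 0 \<le> 0" "pa l x 1 \<le> 0" by (auto simp: bits_def)
    then show False using pa l(1) that by fastforce
  qed
  obtain a where a: "a \<in> bits" "pa l 0 a > 0" using exa[of 0] by (auto simp: bits_def)
  obtain a' where a': "a' \<in> bits" "pa l 1 a' > 0" using exa[of 1] by (auto simp: bits_def)
  have b1: "1 - a \<in> bits" "1 - a \<noteq> a" using a(1) by (auto simp: bits_def)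
  have "PSbox e a (1 - a) 0 0 = 0" using PS_val[OF mub a(1) b1(1)] b1 by (simp add: bits_def)
  then have "pl l * pa l 0 a * R l (e 0 (1 - a)) = 0"
    using term0[OF a(1) b1(1) _ _ _ l(1)] by (simp add: bits_def)
  then have z1: "R l (e 0 (1 - a)) = 0" using l(2) a(2) by simp
  have "PSbox e a' a' 1 1 = 0" using PS_val[OF mub a'(1) a'(1)] by (simp add: bits_def)
  then have "pl l * pa l 1 a' * R l (e 1 a') = 0"
    using term0[OF a'(1) a'(1) _ _ _ l(1)] by (simp add: bits_def)
  then have z2: "R l (e 1 a') = 0" using l(2) a'(2) by simp
  have "R l (e 1 a') = (cmod (inner2 (e 1 a') (e 0 a)))^2"
    unfolding R_def
    by (rule keyK[OF _ onb_e'[OF mub _ a(1)]]) (use rl l(1) z1 R_def in \<open>auto simp: bits_def\<close>)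
  also have "\<dots> = 1/2" using nq[OF mub, of 1 a' 0 a] a'(1) a(1) by (simp add: bits_def)
  finally show False using z2 by simp
qed

lemma lower:
  assumes V: "0 < V" "V \<le> 1" and pS: "pS \<in> steer_weights e (P_col_BB84 V)"
  shows "V \<le> pS"
proof -
  obtain PS PUS where pS01: "0 \<le> pS" "pS \<le> 1" and qPS: "quantum_box e PS"
    and uPUS: "unsteerable e PUS"
    and dec: "\<forall>a\<in>bits. \<forall>b\<in>bits. \<forall>x\<in>bits. \<forall>y\<in>bits.
        P_col_BB84 V a b x y = pS * PS a b x y + (1 - pS) * PUS a b x y"
    using pS unfolding steer_weights_def by blast
  show ?thesis
  proof (cases "pS = 1")
    case True then show ?thesis using V by simp
  next
    case False
    then have pS1: "pS < 1" using pS01 by simp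
    obtain d :: nat and \<rho> M where dens: "density_on (joint_idx d) \<rho>"
      and povm: "\<forall>x\<in>bits. povm2 d (M x)"
      and PSv: "\<forall>a\<in>bits. \<forall>b\<in>bits. \<forall>x\<in>bits. \<forall>y\<in>bits. PS a b x y = Re (TT d (M x a) \<rho> (e y b))"
      using qPS unfolding quantum_box_def TT_def by blast
    have PSnn: "PS a b x y \<ge> 0" if "a \<in> bits" "b \<in> bits" "x \<in> bits" "y \<in> bits" for a b x y
    proof -
      have "psd_on {..<d} (M x a)" using povm that unfolding povm2_def by blast
      moreover have "psd_on (joint_idx d) \<rho>" using dens by (simp add: density_on_def)
      ultimately show ?thesis using PSv that TT_nonneg by metis
    qed
    have b01: "(0::nat) \<in> bits" "(1::nat) \<in> bits" by (auto simp: bits_def)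
    have PSnorm: "PS 0 0 1 1 + PS 0 1 1 1 + PS 1 0 1 1 + PS 1 1 1 1 = 1"
    proof -
      have "\<forall>i<d. \<forall>j<d. M 1 0 i j + M 1 1 i j = (if i = j then 1 else 0)"
        using povm b01 unfolding povm2_def by blast
      from TT_norm[OF this onb_e[OF mub b01(2)]] dens
      have "TT d (M 1 0) \<rho> (e 1 0) + TT d (M 1 0) \<rho> (e 1 1) + TT d (M 1 1) \<rho> (e 1 0) + TT d (M 1 1) \<rho> (e 1 1) = 1"
        by (simp add: density_on_def)
      from arg_cong[OF this, of Re] have "Re (TT d (M 1 0) \<rho> (e 1 0)) + Re (TT d (M 1 0) \<rho> (e 1 1)) + Re (TT d (M 1 1) \<rho> (e 1 0)) + Re (TT d (M 1 1) \<rho> (e 1 1)) = 1"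
        by simp
      then show ?thesis using PSv b01 by simp
    qed
    obtain n :: nat and pl :: "nat \<Rightarrow> real" and pa :: "nat \<Rightarrow> nat \<Rightarrow> nat \<Rightarrow> real"
      and rl :: "nat \<Rightarrow> nat \<Rightarrow> nat \<Rightarrow> complex" where pl: "\<forall>l<n. pl l \<ge> 0"
      and pa: "\<forall>l<n. \<forall>x\<in>bits. (\<forall>a\<in>bits. pa l x a \<ge> 0) \<and> pa l x 0 + pa l x 1 = 1"
      and rl: "\<forall>l<n. density_on {..<2} (rl l)"
      and val: "\<forall>a\<in>bits. \<forall>b\<in>bits. \<forall>x\<in>bits. \<forall>y\<in>bits.
          PUS a b x y = (\<Sum>l<n. pl l * pa l x a *
                         Re (mtrace {..<2} (mmult {..<2} (proj (e y b)) (rl l))))"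
      using uPUS unfolding unsteerable_def by blast
    define R where "R l v = Re (qf {..<2} (rl l) v)" for l v
    have Rnn: "\<And>l v. l < n \<Longrightarrow> R l v \<ge> 0"
      using rl unfolding R_def density_on_def psd_on_qf by blast
    have val': "\<And>a b x y. a \<in> bits \<Longrightarrow> b \<in> bits \<Longrightarrow> x \<in> bits \<Longrightarrow> y \<in> bits \<Longrightarrow>
        PUS a b x y = (\<Sum>l<n. pl l * pa l x a * R l (e y b))"
      using val unfolding R_def tr_proj_qf by blast
    have tnn: "\<forall>l\<in>{..<n}. pl l * pa l x a * R l (e y b) \<ge> 0" if "a \<in> bits" "x \<in> bits" for a b x y
      using pl pa Rnn that by (auto intro!: mult_nonneg_nonneg)
    have term0: "\<And>l. l < n \<Longrightarrow> pl l * pa l 0 a * R l (e 0 b) = 0"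
      if ab: "a \<in> bits" "b \<in> bits" "a \<noteq> b" for a b
    proof -
      have tn: "\<forall>l\<in>{..<n}. pl l * pa l 0 a * R l (e 0 b) \<ge> 0" using tnn ab b01 by blast
      have "(\<Sum>l<n. pl l * pa l 0 a * R l (e 0 b)) \<ge> 0" using tn by (intro sum_nonneg) blast
      then have "PUS a b 0 0 \<ge> 0" using val' ab b01 by simp
      moreover have "PS a b 0 0 \<ge> 0" using PSnn ab b01 by blast
      moreover have "P_col_BB84 V a b 0 0 = 0" using P_col_val[OF ab(1,2) b01(1) b01(1)] ab by simp
      ultimately have "(1 - pS) * PUS a b 0 0 = 0" using dec ab b01 pS01 pS1
        by (smt (verit) mult_nonneg_nonneg)
      then have "PUS a b 0 0 = 0" using pS1 by simp
      then have "(\<Sum>l<n. pl l * pa l 0 a * R l (e 0 b)) = 0" using val' ab b01 by simp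
      then have "\<forall>l\<in>{..<n}. pl l * pa l 0 a * R l (e 0 b) = 0"
        using sum_nonneg_eq_0_iff[of "{..<n}" "\<lambda>l. pl l * pa l 0 a * R l (e 0 b)"] tn
        by simp
      then show "\<And>l. l < n \<Longrightarrow> pl l * pa l 0 a * R l (e 0 b) = 0" by blast
    qed
    have eqR: "pl l * (R l (e 1 0) - R l (e 1 1)) = 0" if l: "l < n" for l
    proof (cases "pl l = 0")
      case True then show ?thesis by simp
    next
      case False
      have "\<exists>a\<in>bits. pa l 0 a > 0"
      proof (rule ccontr)
        assume "\<not> (\<exists>a\<in>bits. pa l 0 a > 0)"
        then have "pa l 0 0 \<le> 0" "pa l 0 1 \<le> 0" by (auto simp: bits_def)
        then show False using pa l b01 by fastforce
      qed
      then obtain a where a: "a \<in> bits" "pa l 0 a > 0" by blast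
      have b1: "1 - a \<in> bits" "a \<noteq> 1 - a" using a(1) by (auto simp: bits_def)
      have "pl l * pa l 0 a * R l (e 0 (1 - a)) = 0" using term0[OF a(1) b1 l] .
      then have z1: "R l (e 0 (1 - a)) = 0" using False a(2) by simp
      have Rj: "R l (e 1 j) = 1/2" if j: "j \<in> bits" for j
      proof -
        have "R l (e 1 j) = (cmod (inner2 (e 1 j) (e 0 a)))^2"
          unfolding R_def
          by (rule keyK[OF _ onb_e'[OF mub _ a(1)]]) (use rl l z1 R_def in \<open>auto simp: bits_def\<close>)
        also have "\<dots> = 1/2" using nq[OF mub, of 1 j 0 a] j a(1) by (simp add: bits_def)
        finally show ?thesis .
      qed
      show ?thesis using Rj[OF b01(1)] Rj[OF b01(2)] by simp
    qed
    have CUS: "PUS 0 0 1 1 + PUS 1 1 1 1 - PUS 0 1 1 1 - PUS 1 0 1 1 = 0"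
    proof -
      have "PUS 0 0 1 1 + PUS 1 1 1 1 - PUS 0 1 1 1 - PUS 1 0 1 1 =
        (\<Sum>l<n. pl l * pa l 1 0 * R l (e 1 0) + pl l * pa l 1 1 * R l (e 1 1)
               - pl l * pa l 1 0 * R l (e 1 1) - pl l * pa l 1 1 * R l (e 1 0))"
        using val' b01 by (simp add: sum.distrib sum_subtractf)
      also have "\<dots> = (\<Sum>l<n. (pa l 1 0 - pa l 1 1) * (pl l * (R l (e 1 0) - R l (e 1 1))))"
        by (intro sum.cong refl) (simp add: algebra_simps)
      also have "\<dots> = 0" using eqR by (intro sum.neutral) simp
      finally show ?thesis .
    qed
    have CP: "P_col_BB84 V 0 0 1 1 + P_col_BB84 V 1 1 1 1 - P_col_BB84 V 0 1 1 1 - P_col_BB84 V 1 0 1 1 = - V"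
      using P_col_val b01 by (simp add: field_simps)
    have CPdec: "P_col_BB84 V 0 0 1 1 + P_col_BB84 V 1 1 1 1 - P_col_BB84 V 0 1 1 1 - P_col_BB84 V 1 0 1 1
      = pS * (PS 0 0 1 1 + PS 1 1 1 1 - PS 0 1 1 1 - PS 1 0 1 1)
        + (1 - pS) * (PUS 0 0 1 1 + PUS 1 1 1 1 - PUS 0 1 1 1 - PUS 1 0 1 1)"
    proof -
      have d: "\<And>a b. a \<in> bits \<Longrightarrow> b \<in> bits \<Longrightarrow> P_col_BB84 V a b 1 1 = pS * PS a b 1 1 + (1 - pS) * PUS a b 1 1"
        using dec b01 by blast
      show ?thesis unfolding d[OF b01(1) b01(1)] d[OF b01(2) b01(2)] d[OF b01(1) b01(2)] d[OF b01(2) b01(1)]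
        by (simp add: algebra_simps)
    qed
    have CS: "PS 0 0 1 1 + PS 1 1 1 1 - PS 0 1 1 1 - PS 1 0 1 1 \<ge> -1"
      using PSnorm PSnn[OF b01(1) b01(1) b01(2) b01(2)] PSnn[OF b01(2) b01(2) b01(2) b01(2)] by linarith
    have "pS * (PS 0 0 1 1 + PS 1 1 1 1 - PS 0 1 1 1 - PS 1 0 1 1) \<ge> pS * (-1)"
      by (rule mult_left_mono[OF CS pS01(1)])
    then show ?thesis using CP CPdec CUS by simp
  qed
qed

end

theorem corollary2:
  fixes V :: real and e :: "nat \<Rightarrow> nat \<Rightarrow> nat \<Rightarrow> complex"
  assumes "0 < V" and "V \<le> 1" and "MUB_pair e"
  shows "quantum_box e (P_col_BB84 V) \<and> is_steering_cost e (P_col_BB84 V) V"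
proof -
  have q: "quantum_box e (P_col_BB84 V)" using qb_P[OF assms(3)] assms(1,2) by simp
  have decv: "P_col_BB84 V a b x y = V * PSbox e a b x y + (1 - V) * PUSbox a b x y"
    if "a \<in> bits" "b \<in> bits" "x \<in> bits" "y \<in> bits" for a b x y
    unfolding P_col_val[OF that] PS_val[OF assms(3) that] PUSbox_def using that unfolding bits_iff
    by (elim disjE) (simp_all add: field_simps)
  have "V \<in> steer_weights e (P_col_BB84 V)"
    unfolding steer_weights_def
    using assms(1,2) qb_PS[OF assms(3)] steer_PS[OF assms(3)] unsteer_PUS[OF assms(3)] decv
    by (intro CollectI conjI exI[of _ "PSbox e"] exI[of _ PUSbox]) auto
  moreover have "\<forall>p\<in>steer_weights e (P_col_BB84 V). V \<le> p"
    using lower[OF assms(3) assms(1,2)] by blast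
  ultimately show ?thesis using q unfolding is_steering_cost_def by blast
qed

end
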